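(* Let $\omega>0$, $0<\rho\le1$ and $A=\begin{pmatrix}0&-\rho^{-1}\omega\\ \rho\omega&0\end{pmatrix}$. Then for the autonomous system $\dot u=Au$ in $\mathbb R^2$, $$\vartheta_1^{\sup,\varlimsup}=\vartheta_1^{\sup,\varliminf}=\vartheta_1^{\varlimsup,\sup}=\vartheta_1^{\varliminf,\sup}=\omega.$$
   Context: For $A\in C([0,\infty),\mathbb R^{d\times d})$ let $\Phi(t,\tau)$ be the solution operator of $\dot u=A(t)u$ (here $\Phi(t,0)=e^{tA}$). $\mathcal G(s,d)$ is the Grassmannian of $s$-dimensional subspaces of $\mathbb R^d$, $P_V$ the orthogonal projection onto $V$, $\|\cdot\|$ the spectral norm. For $V\in\mathcal G(s,d)$ let $a_{0,T}(V)=\int_0^T\|(I_d-P_{\Phi(\tau,0)V})A(\tau)P_{\Phi(\tau,0)V}\|\,d\tau$, and $\vartheta_s^{\sup,\varlimsup}=\sup_{V}\varlimsup_{T\to\infty}\frac1Ta_{0,T}(V)$, $\vartheta_s^{\sup,\varliminf}=\sup_V\varliminf_{T\to\infty}\frac1Ta_{0,T}(V)$, $\vartheta_s^{\varlimsup,\sup}=\varlimsup_{T\to\infty}\sup_V\frac1Ta_{0,T}(V)$, $\vartheta_s^{\varliminf,\sup}=\varliminf_{T\to\infty}\sup_V\frac1Ta_{0,T}(V)$, suprema over $V\in\mathcal G(s,d)$. *)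

theory Defs
  imports "HOL-Analysis.Analysis" "HOL-Library.Extended_Real"
begin

fun mat_pow :: "real^'n^'n \<Rightarrow> nat \<Rightarrow> real^'n^'n" where
  "mat_pow M 0 = mat 1"
| "mat_pow M (Suc n) = M ** mat_pow M n"

(* matrix exponential e^{tA} = sum_n t^n/n! A^n; this is Phi(t,0) for the autonomous system u' = A u *)
definition mat_exp :: "real \<Rightarrow> real^'n^'n \<Rightarrow> real^'n^'n" where
  "mat_exp t M = (\<Sum>n. (t ^ n / fact n) *\<^sub>R mat_pow M n)"

definition grassmannian :: "nat \<Rightarrow> (real^'n) set set" where
  "grassmannian s = {V. subspace V \<and> dim V = s}"

definition orth_proj :: "(real^'n) set \<Rightarrow> real^'n \<Rightarrow> real^'n" where
  "orth_proj V x = (THE y. y \<in> V \<and> (\<forall>v\<in>V. (x - y) \<bullet> v = 0))"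

(* a_{0,T}(V) for the autonomous system with Phi(tau,0) = e^{tau A};
   the spectral norm is the operator norm onorm *)
definition a_int :: "real^'n^'n \<Rightarrow> (real^'n) set \<Rightarrow> real \<Rightarrow> real" where
  "a_int A V T = integral {0..T}
     (\<lambda>\<tau>. let W = (\<lambda>x. mat_exp \<tau> A *v x) ` V in
          onorm (\<lambda>x. (A *v orth_proj W x) - orth_proj W (A *v orth_proj W x)))"

definition theta_sup_limsup :: "nat \<Rightarrow> real^'n^'n \<Rightarrow> ereal" where
  "theta_sup_limsup s A = (SUP V\<in>grassmannian s. Limsup at_top (\<lambda>T. ereal (a_int A V T / T)))"

definition theta_sup_liminf :: "nat \<Rightarrow> real^'n^'n \<Rightarrow> ereal" where
  "theta_sup_liminf s A = (SUP V\<in>grassmannian s. Liminf at_top (\<lambda>T. ereal (a_int A V T / T)))"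

definition theta_limsup_sup :: "nat \<Rightarrow> real^'n^'n \<Rightarrow> ereal" where
  "theta_limsup_sup s A = Limsup at_top (\<lambda>T::real. SUP V\<in>grassmannian s. ereal (a_int A V T / T))"

definition theta_liminf_sup :: "nat \<Rightarrow> real^'n^'n \<Rightarrow> ereal" where
  "theta_liminf_sup s A = Liminf at_top (\<lambda>T::real. SUP V\<in>grassmannian s. ereal (a_int A V T / T))"

end

theory Submission imports Defs "HOL-Real_Asymp.Real_Asymp" begin

lemma orth_proj_span1:
  fixes u :: "real^'n"
  assumes "u \<noteq> 0"
  shows "orth_proj (span {u}) x = ((x \<bullet> u) / (u \<bullet> u)) *\<^sub>R u"
  unfolding orth_proj_def
proof (rule the_equality)
  have uu: "u \<bullet> u \<noteq> 0" using assms by simp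
  show "((x \<bullet> u) / (u \<bullet> u)) *\<^sub>R u \<in> span {u} \<and>
    (\<forall>v\<in>span {u}. (x - ((x \<bullet> u) / (u \<bullet> u)) *\<^sub>R u) \<bullet> v = 0)"
    using uu by (auto simp: span_singleton span_base span_mul inner_diff_left inner_scaleR_right)
  fix y assume y: "y \<in> span {u} \<and> (\<forall>v\<in>span {u}. (x - y) \<bullet> v = 0)"
  then obtain c where c: "y = c *\<^sub>R u" by (auto simp: span_singleton)
  have "(x - y) \<bullet> u = 0" using y by (auto intro: span_base)
  then have "x \<bullet> u = c * (u \<bullet> u)" by (simp add: c inner_diff_left)
  then show "y = ((x \<bullet> u) / (u \<bullet> u)) *\<^sub>R u" using uu c by simp
qed

lemma onorm_rank1:
  fixes u z :: "real^'n"
  shows "onorm (\<lambda>x. (x \<bullet> u) *\<^sub>R z) = norm u * norm z"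
proof -
  have bl: "bounded_linear (\<lambda>x::real^'n. x \<bullet> u)" by (rule bounded_linear_inner_left)
  have "onorm (\<lambda>x::real^'n. x \<bullet> u) = norm u"
  proof (rule antisym)
    show "onorm (\<lambda>x::real^'n. x \<bullet> u) \<le> norm u"
      by (rule onorm_le) (simp add: Cauchy_Schwarz_ineq2 mult.commute)
    show "norm u \<le> onorm (\<lambda>x::real^'n. x \<bullet> u)"
    proof (cases "u = 0")
      case True then show ?thesis by (simp add: onorm_zero)
    next
      case False
      have "norm (u \<bullet> u) / norm u \<le> onorm (\<lambda>x::real^'n. x \<bullet> u)" by (rule le_onorm[OF bl])
      moreover have "norm (u \<bullet> u) / norm u = norm u"
        using False by (simp add: power2_norm_eq_inner[symmetric] power2_eq_square)
      ultimately show ?thesis by simp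
    qed
  qed
  then show ?thesis using onorm_scaleR_left[OF bl, of z] by simp
qed
lemma alg1:
  fixes a b p q S :: real
  assumes "S = a^2 + b^2" "S > 0"
  shows "(p * b - ((p * b * a + q * a * b) / S) * a) = b * (p*b^2 - q*a^2) / S"
proof -
  have "p*b*S - (p * b * a + q * a * b) * a = b * (p*b^2 - q*a^2)" unfolding assms(1) by algebra
  then show ?thesis using assms(2) by (simp add: field_simps)
qed
lemma alg2:
  fixes a b p q S :: real
  assumes "S = a^2 + b^2" "S > 0"
  shows "(q * a - ((p * b * a + q * a * b) / S) * b) = a * (q*a^2 - p*b^2) / S"
proof -
  have "q*a*S - (p * b * a + q * a * b) * b = a * (q*a^2 - p*b^2)" unfolding assms(1) by algebra
  then show ?thesis using assms(2) by (simp add: field_simps)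
qed
lemma alg3:
  fixes a b p q S :: real
  assumes "S = a^2 + b^2" "S > 0"
  shows "(b * (p*b^2 - q*a^2) / S) * (b * (p*b^2 - q*a^2) / S) + (a * (q*a^2 - p*b^2) / S) * (a * (q*a^2 - p*b^2) / S) = (q*a^2 - p*b^2)^2 / S"
proof -
  have "(b * (p*b^2 - q*a^2) / S) * (b * (p*b^2 - q*a^2) / S) + (a * (q*a^2 - p*b^2) / S) * (a * (q*a^2 - p*b^2) / S)
    = ((a^2+b^2) * (q*a^2 - p*b^2)^2) / (S*S)" by (simp add: field_simps power2_eq_square) algebra
  also have "\<dots> = (q*a^2 - p*b^2)^2 / S" unfolding assms(1)[symmetric] using assms(2) by simp
  finally show ?thesis .
qed
lemma cons_alg: fixes cc ss xx yy rr :: real assumes "rr > 0"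
  shows "rr*(cc*xx - ss/rr*yy)^2 + (cc*yy + rr * ss*xx)^2/rr = (rr*xx^2 + yy^2/rr)*(ss^2+cc^2)"
proof -
  have e: "ss/rr*yy = (ss*yy)/rr" "(cc*yy + rr * ss*xx)^2/rr = (cc*yy + rr * ss*xx)^2/rr" by simp_all
  have "rr*(cc*xx - ss/rr*yy)^2 = rr*(cc*xx)^2 - 2*cc*xx* ss*yy + (ss*yy)^2/rr"
    using assms by (simp add: power2_eq_square field_simps)
  moreover have "(cc*yy + rr * ss*xx)^2/rr = (cc*yy)^2/rr + 2*cc*yy* ss*xx + rr*(ss*xx)^2"
    using assms by (simp add: power2_eq_square field_simps)
  moreover have "(rr*xx^2 + yy^2/rr)*(ss^2+cc^2) = rr*(cc*xx)^2 + (ss*yy)^2/rr + (cc*yy)^2/rr + rr*(ss*xx)^2"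
    using assms by (simp add: power2_eq_square field_simps)
  ultimately show ?thesis by simp
qed
lemma arc_deriv:
  fixes a b :: "real \<Rightarrow> real" and w r :: real
  assumes da: "(a has_real_derivative (-(w/r) * b t)) (at t)"
    and db: "(b has_real_derivative (r * w * a t)) (at t)"
    and r: "r > 0" and S: "(a t)^2 + (b t)^2 > 0"
  shows "((\<lambda>t. w*t + arctan ((r-1)*a t*b t / (r*(a t)^2 + (b t)^2))) has_real_derivative
     (r * w*(a t)^2 + w/r*(b t)^2)/((a t)^2+(b t)^2)) (at t)"
proof -
  define A B where "A = a t" and "B = b t"
  define N where "N = (r-1)*A*B"
  define D where "D = r*A^2 + B^2"
  define N' where "N' = (r-1)*((-(w/r) * B)*B + A*(r * w * A))"
  define D' where "D' = r*(2*A*(-(w/r) * B)) + 2*B*(r * w * A)"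
  have S': "A^2 + B^2 > 0" using S unfolding A_def B_def .
  have D0: "D > 0"
  proof (cases "A = 0")
    case True then show ?thesis using S' by (simp add: D_def)
  next
    case False then have "r*A^2 > 0" using r by simp
    then show ?thesis by (simp add: add_pos_nonneg D_def)
  qed
  have dN: "((\<lambda>t. (r-1)*a t*b t) has_real_derivative N') (at t)"
    unfolding N'_def A_def B_def
    using DERIV_mult[OF DERIV_cmult[OF da, of "r-1"] db]
    by (simp add: algebra_simps)
  have dD: "((\<lambda>t. r*(a t)^2 + (b t)^2) has_real_derivative D') (at t)"
    unfolding D'_def A_def B_def
    using DERIV_add[OF DERIV_cmult[OF DERIV_mult[OF da da], of r] DERIV_mult[OF db db]]
    by (simp add: power2_eq_square algebra_simps)
  have dq: "((\<lambda>t. (r-1)*a t*b t / (r*(a t)^2 + (b t)^2)) has_real_derivative (N' * D - N * D') / (D * D)) (at t)"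
    using DERIV_divide[OF dN dD] D0 unfolding N_def D_def A_def B_def by simp
  have darc: "((\<lambda>t. w*t + arctan ((r-1)*a t*b t / (r*(a t)^2 + (b t)^2))) has_real_derivative
      w + inverse (1 + (N/D)^2) * ((N' * D - N * D') / (D * D))) (at t)"
    using DERIV_add[OF DERIV_cmult_Id[of w] DERIV_arctan[THEN DERIV_chain2, OF dq]]
    unfolding N_def D_def A_def B_def by simp
  have key1: "D^2 + N^2 = (r^2*A^2 + B^2) * (A^2+B^2)"
    unfolding D_def N_def by algebra
  have key2: "N' * D - N * D' = w*(r-1)*(A^2 - B^2/r)*(r^2*A^2+B^2)"
  proof -
    define k where "k = w/r"
    have wk: "w = k*r" using r by (simp add: k_def)
    have e1: "A^2 - B^2/r = (r*A^2 - B^2)/r" using r by (simp add: field_simps)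
    have "N' * D - N * D' = k*(r-1)*(r*A^2 - B^2)*(r^2*A^2+B^2)"
      unfolding N'_def D'_def N_def D_def k_def[symmetric] unfolding wk by algebra
    then show ?thesis unfolding e1 wk using r by simp
  qed
  have "inverse (1 + (N/D)^2) * ((N' * D - N * D') / (D * D)) = (N' * D - N * D') / (D^2 + N^2)"
  proof -
    have e: "1 + (N/D)^2 = (D^2+N^2)/D^2" using D0 by (simp add: field_simps)
    have p: "D^2+N^2 > 0" using D0 by (simp add: add_pos_nonneg)
    show ?thesis unfolding e using p D0 by (simp add: power2_eq_square)
  qed
  also have "\<dots> = w*(r-1)*(A^2 - B^2/r) / (A^2+B^2)"
  proof -
    have p2: "r^2*A^2+B^2 > 0" using S' r
      by (cases "A = 0") (simp, simp add: add_pos_nonneg)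
    show ?thesis unfolding key1 key2 using p2 by simp
  qed
  finally have "w + inverse (1 + (N/D)^2) * ((N' * D - N * D') / (D * D)) = w + w*(r-1)*(A^2 - B^2/r) / (A^2+B^2)"
    by simp
  also have "\<dots> = (w*(A^2+B^2) + w*(r-1)*(A^2 - B^2/r)) / (A^2+B^2)"
    using S' by (auto simp: add_divide_distrib)
  also have "w*(A^2+B^2) + w*(r-1)*(A^2 - B^2/r) = r * w*A^2 + w/r*B^2"
    using r by (simp add: field_simps)
  finally have "w + inverse (1 + (N/D)^2) * ((N' * D - N * D') / (D * D)) = (r * w*A^2 + w/r*B^2)/(A^2+B^2)" .
  then show ?thesis using darc unfolding A_def B_def by simp
qed

lemma grass1:
  fixes V :: "(real^'n) set"
  assumes "V \<in> grassmannian 1"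
  shows "\<exists>v. v \<noteq> 0 \<and> V = span {v}"
proof -
  have sV: "subspace V" and dV: "dim V = 1" using assms by (auto simp: grassmannian_def)
  obtain B where B: "B \<subseteq> V" "independent B" "V \<subseteq> span B" "card B = dim V"
    by (rule basis_exists)
  then obtain v where Bv: "B = {v}" using dV by (auto simp: card_1_singleton_iff)
  have "v \<noteq> 0" using B(2) Bv dependent_zero by blast
  moreover have "V = span {v}"
    using B Bv sV by (metis span_minimal subset_antisym)
  ultimately show ?thesis by blast
qed

lemma grass1_ne: "span {axis 1 (1::real) :: real^2} \<in> grassmannian 1"
  by (simp add: grassmannian_def dim_span axis_eq_0_iff)

lemma image_span1:
  fixes M :: "real^'n^'n"
  shows "(\<lambda>x. M *v x) ` span {v} = span {M *v v}"
  using linear_span_image[of "\<lambda>x. M *v x" "{v}"] by (simp add: matrix_vector_mul_linear)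

context
  fixes \<omega> \<rho> :: real and A :: "real^2^2"
  assumes w0: "\<omega> > 0" and r0: "0 < \<rho>"
    and Adef: "A = vector [vector [0, - \<omega> / \<rho>], vector [\<rho> * \<omega>, 0]]"
begin

lemma A_entries: "A$1$1 = 0" "A$1$2 = - \<omega>/\<rho>" "A$2$1 = \<rho>*\<omega>" "A$2$2 = 0"
  by (simp_all add: Adef)

lemma AA: "A ** A = (-(\<omega>^2)) *\<^sub>R mat 1"
  unfolding matrix_matrix_mult_def
  by (simp add: vec_eq_iff forall_2 sum_2 A_entries mat_def r0 power2_eq_square)
    (use r0 in \<open>simp add: field_simps\<close>)

lemma mat_pow_A: "mat_pow A n = (if even n then (-(\<omega>^2))^(n div 2) *\<^sub>R mat 1 else (-(\<omega>^2))^(n div 2) *\<^sub>R A)"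
proof (induction n)
  case 0 then show ?case by simp
next
  case (Suc n)
  show ?case
  proof (cases "even n")
    case True
    then show ?thesis using Suc by (simp add: matrix_scalar_ac matrix_mul_rid)
  next
    case False
    then have "Suc n div 2 = Suc (n div 2)" by presburger
    then show ?thesis using Suc False by (simp add: matrix_scalar_ac scalar_matrix_assoc[symmetric] AA)
  qed
qed


lemma term_eq: "(t ^ n / fact n) *\<^sub>R mat_pow A n =
   (cos_coeff n * (\<omega>*t)^n) *\<^sub>R mat 1 + (sin_coeff n * (\<omega>*t)^n / \<omega>) *\<^sub>R A"
proof (cases "even n")
  case True
  then obtain k where k: "n = 2*k" by blast
  have "(-(\<omega>^2))^k = (-1)^k * \<omega>^(2*k)"
    by (simp add: power_mult power_mult_distrib[symmetric])
  then show ?thesis using k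
    by (simp add: mat_pow_A cos_coeff_def sin_coeff_def power_mult_distrib)
next
  case False
  then obtain k where k: "n = Suc (2*k)" by (metis oddE Suc_eq_plus1)
  have "(-(\<omega>^2))^k = (-1)^k * \<omega>^(2*k)"
    by (simp add: power_mult power_mult_distrib[symmetric])
  have "mat_pow A n = (-(\<omega>^2))^k *\<^sub>R A" unfolding mat_pow_A using k by simp
  then show ?thesis using k w0 \<open>(-(\<omega>^2))^k = (-1)^k * \<omega>^(2*k)\<close>
    by (simp add: cos_coeff_def sin_coeff_def power_mult_distrib)
qed

lemma mat_exp_A: "mat_exp t A = cos (\<omega>*t) *\<^sub>R mat 1 + (sin (\<omega>*t) / \<omega>) *\<^sub>R A"
proof -
  have "(\<lambda>n. (t ^ n / fact n) *\<^sub>R mat_pow A n) sums (cos (\<omega>*t) *\<^sub>R mat 1 + (sin (\<omega>*t) / \<omega>) *\<^sub>R A)"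
    unfolding term_eq
    apply (intro sums_add sums_scaleR_left)
    using cos_converges[of "\<omega>*t"] apply simp
    using sums_divide[OF sin_converges[of "\<omega>*t"], of \<omega>] by simp
  then show ?thesis unfolding mat_exp_def by (simp add: sums_iff)
qed

lemma Phi_v: "mat_exp t A *v v = cos (\<omega>*t) *\<^sub>R v + (sin (\<omega>*t) / \<omega>) *\<^sub>R (A *v v)"
  by (simp add: mat_exp_A matrix_vector_mult_add_rdistrib scaleR_matrix_vector_assoc[symmetric])

lemma Av: "(A *v v)$1 = - \<omega>/\<rho> * v$2" "(A *v v)$2 = \<rho>*\<omega> * v$1"
  by (simp_all add: matrix_vector_mult_def sum_2 A_entries)

lemma Phi_1: "(mat_exp t A *v v)$1 = cos (\<omega>*t) * v$1 - sin (\<omega>*t) / \<rho> * v$2"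
  using w0 by (simp add: Phi_v Av)
lemma Phi_2: "(mat_exp t A *v v)$2 = cos (\<omega>*t) * v$2 + \<rho> * sin (\<omega>*t) * v$1"
  using w0 by (simp add: Phi_v Av)

lemma integrand_eq:
  fixes u :: "real^2"
  assumes "u \<noteq> 0"
  shows "onorm (\<lambda>x. (A *v orth_proj (span {u}) x) - orth_proj (span {u}) (A *v orth_proj (span {u}) x))
    = (\<rho>*\<omega> * (u$1)^2 + \<omega>/\<rho> * (u$2)^2) / ((u$1)^2 + (u$2)^2)"
proof -
  define S where "S = u \<bullet> u"
  define z where "z = A *v u - (((A *v u) \<bullet> u) / S) *\<^sub>R u"
  have S0: "S > 0" using assms by (simp add: S_def)
  have S2: "S = (u$1)^2 + (u$2)^2" by (simp add: S_def inner_vec_def sum_2 power2_eq_square)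
  have f: "(\<lambda>x. (A *v orth_proj (span {u}) x) - orth_proj (span {u}) (A *v orth_proj (span {u}) x))
     = (\<lambda>x. (x \<bullet> u) *\<^sub>R ((1/S) *\<^sub>R z))"
    by (rule ext) (simp add: orth_proj_span1[OF assms] z_def S_def[symmetric] matrix_vector_mult_scaleR
       inner_scaleR_left algebra_simps)
  define Q where "Q = \<rho>*\<omega> * (u$1)^2 + \<omega>/\<rho> * (u$2)^2"
  have Q0: "Q \<ge> 0" using w0 r0 by (simp add: Q_def)
  have z1: "z$1 = - \<omega>/\<rho> * u$2 - ((- \<omega>/\<rho> * u$2 * u$1 + \<rho>*\<omega> * u$1 * u$2) / S) * u$1"
    by (simp add: z_def Av inner_vec_def sum_2)
  have z2: "z$2 = \<rho>*\<omega> * u$1 - ((- \<omega>/\<rho> * u$2 * u$1 + \<rho>*\<omega> * u$1 * u$2) / S) * u$2"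
    by (simp add: z_def Av inner_vec_def sum_2)
  have zz: "z \<bullet> z = Q^2 / S"
  proof -
    have "z \<bullet> z = z$1 * z$1 + z$2 * z$2" by (simp add: inner_vec_def sum_2)
    also have "\<dots> = (\<rho>*\<omega> * (u$1)^2 - (- \<omega>/\<rho>) * (u$2)^2)^2 / S"
      unfolding z1 z2 alg1[OF S2 S0] alg2[OF S2 S0] alg3[OF S2 S0] ..
    finally show ?thesis by (simp add: Q_def)
  qed
  have nz: "norm z = Q / sqrt S"
    using zz Q0 S0 by (simp add: norm_eq_sqrt_inner real_sqrt_divide)
  have nu: "norm u = sqrt S" by (simp add: S_def norm_eq_sqrt_inner)
  have "onorm (\<lambda>x. (x \<bullet> u) *\<^sub>R ((1/S) *\<^sub>R z)) = Q / S"
    unfolding onorm_rank1 using S0 by (simp add: nz nu)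
  then show ?thesis unfolding f Q_def S2 .
qed

definition "uu1 (v::real^2) t = cos (\<omega>*t) * v$1 - sin (\<omega>*t) / \<rho> * v$2"
definition "uu2 (v::real^2) t = cos (\<omega>*t) * v$2 + \<rho> * sin (\<omega>*t) * v$1"

lemma d_uu1: "(uu1 v has_real_derivative (- (\<omega>/\<rho>) * uu2 v t)) (at t)"
proof -
  have "((\<lambda>t. cos (\<omega>*t) * v$1 - sin (\<omega>*t) * (v$2/\<rho>)) has_real_derivative (- (sin (\<omega>*t) * \<omega>) * v$1 - (cos (\<omega>*t) * \<omega>) * (v$2/\<rho>))) (at t)"
    using r0 by (auto intro!: derivative_eq_intros)
  moreover have "(\<lambda>t. cos (\<omega>*t) * v$1 - sin (\<omega>*t) * (v$2/\<rho>)) = uu1 v" by (auto simp: uu1_def)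
  moreover have "- (sin (\<omega>*t) * \<omega>) * v$1 - (cos (\<omega>*t) * \<omega>) * (v$2/\<rho>) = - (\<omega>/\<rho>) * uu2 v t"
    using r0 by (simp add: uu2_def field_simps)
  ultimately show ?thesis by simp
qed

lemma d_uu2: "(uu2 v has_real_derivative (\<rho> * \<omega> * uu1 v t)) (at t)"
proof -
  have "((\<lambda>t. cos (\<omega>*t) * v$2 + sin (\<omega>*t) * (\<rho> * v$1)) has_real_derivative (- (sin (\<omega>*t) * \<omega>) * v$2 + (cos (\<omega>*t) * \<omega>) * (\<rho> * v$1))) (at t)"
    using r0 by (auto intro!: derivative_eq_intros)
  moreover have "(\<lambda>t. cos (\<omega>*t) * v$2 + sin (\<omega>*t) * (\<rho> * v$1)) = uu2 v" by (auto simp: uu2_def)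
  moreover have "- (sin (\<omega>*t) * \<omega>) * v$2 + (cos (\<omega>*t) * \<omega>) * (\<rho> * v$1) = \<rho> * \<omega> * uu1 v t"
    using r0 by (simp add: uu1_def field_simps)
  ultimately show ?thesis by simp
qed

lemma conserved: "\<rho> * (uu1 v t)^2 + (uu2 v t)^2/\<rho> = \<rho> * (v$1)^2 + (v$2)^2/\<rho>"
proof -
  have "\<rho> * (uu1 v t)^2 + (uu2 v t)^2/\<rho> = (\<rho> * (v$1)^2 + (v$2)^2/\<rho>) * ((sin (\<omega>*t))^2 + (cos (\<omega>*t))^2)"
    unfolding uu1_def uu2_def by (rule cons_alg[OF r0])
  then show ?thesis by simp
qed

lemma uu_nz: assumes "v \<noteq> 0" shows "(uu1 v t)^2 + (uu2 v t)^2 > 0"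
proof -
  have "v$1 \<noteq> 0 \<or> v$2 \<noteq> 0" using assms by (auto simp: vec_eq_iff forall_2)
  then have "\<rho> * (v$1)^2 + (v$2)^2/\<rho> > 0" using r0
    by (auto intro: add_pos_nonneg add_nonneg_pos)
  then have "uu1 v t \<noteq> 0 \<or> uu2 v t \<noteq> 0" using conserved[of v t] by auto
  then show ?thesis by (auto intro: add_pos_nonneg add_nonneg_pos)
qed

definition "gg v t = (\<rho> * \<omega>*(uu1 v t)^2 + \<omega>/\<rho>*(uu2 v t)^2)/((uu1 v t)^2+(uu2 v t)^2)"
definition "FF v t = \<omega>*t + arctan ((\<rho>-1)*uu1 v t*uu2 v t / (\<rho>*(uu1 v t)^2 + (uu2 v t)^2))"

lemma integrand_V:
  assumes "v \<noteq> 0"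
  shows "(let W = (\<lambda>x. mat_exp \<tau> A *v x) ` span {v} in
          onorm (\<lambda>x. (A *v orth_proj W x) - orth_proj W (A *v orth_proj W x))) = gg v \<tau>"
proof -
  define u where "u = mat_exp \<tau> A *v v"
  have u1: "u$1 = uu1 v \<tau>" by (simp add: u_def Phi_1 uu1_def)
  have u2: "u$2 = uu2 v \<tau>" by (simp add: u_def Phi_2 uu2_def)
  have "u \<noteq> 0" using uu_nz[OF assms, of \<tau>] u1 u2 by auto
  then show ?thesis
    unfolding Let_def image_span1 u_def[symmetric] using integrand_eq[OF \<open>u \<noteq> 0\<close>]
    by (simp add: gg_def u1 u2)
qed

lemma FF_deriv: "v \<noteq> 0 \<Longrightarrow> (FF v has_real_derivative gg v t) (at t)"
  unfolding FF_def gg_def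
  by (rule arc_deriv[OF d_uu1 d_uu2 r0 uu_nz])

lemma a_int_eq:
  assumes "v \<noteq> 0" "T \<ge> 0"
  shows "a_int A (span {v}) T = FF v T - FF v 0"
proof -
  have "(gg v has_integral FF v T - FF v 0) {0..T}"
    apply (rule fundamental_theorem_of_calculus[OF assms(2)])
    using FF_deriv[OF assms(1)]
    by (simp add: has_real_derivative_iff_has_vector_derivative has_vector_derivative_at_within)
  moreover have "a_int A (span {v}) T = integral {0..T} (gg v)"
    unfolding a_int_def integrand_V[OF assms(1)] ..
  ultimately show ?thesis by (simp add: integral_unique)
qed

lemma a_int_bound:
  assumes "v \<noteq> 0" "T \<ge> 0"
  shows "\<bar>a_int A (span {v}) T - \<omega> * T\<bar> \<le> pi"
proof -
  have "a_int A (span {v}) T - \<omega> * T =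
     arctan ((\<rho>-1)*uu1 v T*uu2 v T / (\<rho>*(uu1 v T)^2 + (uu2 v T)^2))
     - arctan ((\<rho>-1)*uu1 v 0*uu2 v 0 / (\<rho>*(uu1 v 0)^2 + (uu2 v 0)^2))"
    unfolding a_int_eq[OF assms] FF_def by simp
  moreover define p where "p = (\<rho>-1)*uu1 v T*uu2 v T / (\<rho>*(uu1 v T)^2 + (uu2 v T)^2)"
  moreover define q where "q = (\<rho>-1)*uu1 v 0*uu2 v 0 / (\<rho>*(uu1 v 0)^2 + (uu2 v 0)^2)"
  ultimately have e: "a_int A (span {v}) T - \<omega> * T = arctan p - arctan q" by simp
  show ?thesis unfolding e using arctan_ubound[of p] arctan_lbound[of p] arctan_ubound[of q] arctan_lbound[of q]
    by linarith
qed

lemma ratio_bounds: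
  assumes "V \<in> grassmannian 1" "T > 0"
  shows "ereal (\<omega> - pi/T) \<le> ereal (a_int A V T / T) \<and> ereal (a_int A V T / T) \<le> ereal (\<omega> + pi/T)"
proof -
  obtain v where v: "v \<noteq> 0" "V = span {v}" using grass1[OF assms(1)] by blast
  have b: "\<bar>a_int A V T - \<omega> * T\<bar> \<le> pi" using a_int_bound[OF v(1)] assms(2) v(2) by simp
  have l: "\<omega>*T - pi \<le> a_int A V T" and h: "a_int A V T \<le> \<omega>*T + pi" using b by (auto simp: abs_le_iff)
  have "(\<omega>*T - pi)/T \<le> a_int A V T / T" using divide_right_mono[OF l, of T] assms(2) by simp
  moreover have "(\<omega>*T - pi)/T = \<omega> - pi/T" using assms(2) by (simp add: field_simps)
  moreover have "a_int A V T / T \<le> (\<omega>*T + pi)/T" using divide_right_mono[OF h, of T] assms(2) by simp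
  moreover have "(\<omega>*T + pi)/T = \<omega> + pi/T" using assms(2) by (simp add: field_simps)
  ultimately have "\<omega> - pi/T \<le> a_int A V T / T" "a_int A V T / T \<le> \<omega> + pi/T" by simp_all
  then show ?thesis by simp
qed

lemma lim_lo: "((\<lambda>T. ereal (\<omega> - pi/T)) \<longlongrightarrow> ereal \<omega>) at_top"
proof -
  have "((\<lambda>T. \<omega> - pi/T) \<longlongrightarrow> \<omega>) at_top" by real_asymp
  then show ?thesis by (rule tendsto_ereal)
qed

lemma lim_hi: "((\<lambda>T. ereal (\<omega> + pi/T)) \<longlongrightarrow> ereal \<omega>) at_top"
proof -
  have "((\<lambda>T. \<omega> + pi/T) \<longlongrightarrow> \<omega>) at_top" by real_asymp
  then show ?thesis by (rule tendsto_ereal)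
qed

lemma lim_V:
  assumes "V \<in> grassmannian 1"
  shows "((\<lambda>T. ereal (a_int A V T / T)) \<longlongrightarrow> ereal \<omega>) at_top"
proof (rule tendsto_sandwich[OF _ _ lim_lo lim_hi])
  show "\<forall>\<^sub>F T in at_top. ereal (\<omega> - pi/T) \<le> ereal (a_int A V T / T)"
    using eventually_gt_at_top[of 0] by eventually_elim (use ratio_bounds[OF assms] in blast)
  show "\<forall>\<^sub>F T in at_top. ereal (a_int A V T / T) \<le> ereal (\<omega> + pi/T)"
    using eventually_gt_at_top[of 0] by eventually_elim (use ratio_bounds[OF assms] in blast)
qed

lemma lim_sup:
  "((\<lambda>T. SUP V\<in>grassmannian 1. ereal (a_int A V T / T)) \<longlongrightarrow> ereal \<omega>) at_top"
proof (rule tendsto_sandwich[OF _ _ lim_lo lim_hi])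
  show "\<forall>\<^sub>F T in at_top. ereal (\<omega> - pi/T) \<le> (SUP V\<in>grassmannian 1. ereal (a_int A V T / T))"
    using eventually_gt_at_top[of 0] proof eventually_elim
    case (elim T)
    show ?case
      using ratio_bounds[OF grass1_ne elim] by (meson SUP_upper2 grass1_ne)
  qed
  show "\<forall>\<^sub>F T in at_top. (SUP V\<in>grassmannian 1. ereal (a_int A V T / T)) \<le> ereal (\<omega> + pi/T)"
    using eventually_gt_at_top[of 0] proof eventually_elim
    case (elim T)
    show ?case
      using ratio_bounds[OF _ elim] by (meson SUP_least)
  qed
qed

end

theorem mainTheorem10:
  fixes \<omega> \<rho> :: real and A :: "real^2^2"
  assumes "\<omega> > 0" and "0 < \<rho>" and "\<rho> \<le> 1"
    and "A = vector [vector [0, - \<omega> / \<rho>], vector [\<rho> * \<omega>, 0]]"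
  shows "theta_sup_limsup 1 A = ereal \<omega> \<and> theta_sup_liminf 1 A = ereal \<omega>
         \<and> theta_limsup_sup 1 A = ereal \<omega> \<and> theta_liminf_sup 1 A = ereal \<omega>"
proof -
  note lV = lim_V[OF assms(1,2,4)]
  note lS = lim_sup[OF assms(1,2,4)]
  have ne: "grassmannian 1 \<noteq> ({} :: (real^2) set set)" using grass1_ne by blast
  have e1: "\<And>V. V \<in> grassmannian 1 \<Longrightarrow> Limsup at_top (\<lambda>T. ereal (a_int A V T / T)) = ereal \<omega>"
    by (rule lim_imp_Limsup[OF _ lV]) simp_all
  have e2: "\<And>V. V \<in> grassmannian 1 \<Longrightarrow> Liminf at_top (\<lambda>T. ereal (a_int A V T / T)) = ereal \<omega>"
    by (rule lim_imp_Liminf[OF _ lV]) simp_all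
  have "theta_sup_limsup 1 A = ereal \<omega>"
    unfolding theta_sup_limsup_def using ne by (simp add: e1)
  moreover have "theta_sup_liminf 1 A = ereal \<omega>"
    unfolding theta_sup_liminf_def using ne by (simp add: e2)
  moreover have "theta_limsup_sup 1 A = ereal \<omega>"
    unfolding theta_limsup_sup_def by (rule lim_imp_Limsup[OF _ lS]) simp
  moreover have "theta_liminf_sup 1 A = ereal \<omega>"
    unfolding theta_liminf_sup_def by (rule lim_imp_Liminf[OF _ lS]) simp
  ultimately show ?thesis by simp
qed

end
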